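(* Let $P\subseteq\mathbb{R}^m$ and $Q\subseteq\mathbb{R}^n$, let $\ell\le m$ and $\ell'\le n$ be positive integers with $m-\ell=n-\ell'$, and let $I=\{1,\dots,\ell\}$ and $I'=\{1,\dots,\ell'\}$. Let $g:\mathbb{R}^\ell\to\mathbb{R}^{\ell'}$ be an integral affine transformation, and define $f:\mathbb{R}^m\to\mathbb{R}^n$ by $f(x)=(g(x^1),x^2)$ where $x=(x^1,x^2)$ with $x^1\in\mathbb{R}^\ell$, $x^2\in\mathbb{R}^{m-\ell}$. If $f(P)\subseteq Q$, then for every integer $k\ge 1$, \[f\big(\mathrm{SC}^k(P,I)\big)\subseteq \mathrm{SC}^k(Q,I').\]
   Context: An integral affine transformation $g:\mathbb{R}^\ell\to\mathbb{R}^{\ell'}$ is a map $g(x)=Vx+v$ with $V$ an integral $\ell'\times\ell$ matrix and $v\in\mathbb{Z}^{\ell'}$. For $(\pi,\pi_0)\in\mathbb{Z}^n\times\mathbb{Z}$, the split set is $S(\pi,\pi_0)=\{x\in\mathbb{R}^n:\pi_0<\pi^Tx<\pi_0+1\}$. For $J\subseteq\{1,\dots,n\}$, $\mathcal{S}_n(J)$ is the family of split sets $S(\pi,\pi_0)$ with $\pi\in\mathbb{Z}^n$, $\pi_j=0$ for $j\notin J$, $\pi_0\in\mathbb{Z}$. For $X\subseteq\mathbb{R}^n$, $\mathrm{SC}(X,J)=\bigcap_{S\in\mathcal{S}_n(J)}\mathrm{conv}(X\setminus S)$, $\mathrm{SC}^1(X,J)=\mathrm{SC}(X,J)$ and $\mathrm{SC}^k(X,J)=\mathrm{SC}(\mathrm{SC}^{k-1}(X,J),J)$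 for $k\ge2$. *)

theory Defs
  imports "HOL-Analysis.Analysis"
begin

text \<open>Model of R^n: functions nat => real vanishing at all indices >= n
  (coordinates are 0-based, so coordinate j of the paper is index j-1).\<close>

definition Rn :: "nat \<Rightarrow> (nat \<Rightarrow> real) set" where
  "Rn n = {x. \<forall>i\<ge>n. x i = 0}"

definition convex_fun :: "(nat \<Rightarrow> real) set \<Rightarrow> bool" where
  "convex_fun X \<longleftrightarrow> (\<forall>x\<in>X. \<forall>y\<in>X. \<forall>u::real. 0 \<le> u \<and> u \<le> 1 \<longrightarrow>
      (\<lambda>i. u * x i + (1 - u) * y i) \<in> X)"

definition conv :: "(nat \<Rightarrow> real) set \<Rightarrow> (nat \<Rightarrow> real) set" where
  "conv X = convex_fun hull X"

definition split_set :: "nat \<Rightarrow> (nat \<Rightarrow> int) \<Rightarrow> int \<Rightarrow> (nat \<Rightarrow> real) set" where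
  "split_set n p p0 = {x. x \<in> Rn n \<and> real_of_int p0 < (\<Sum>i<n. real_of_int (p i) * x i)
                          \<and> (\<Sum>i<n. real_of_int (p i) * x i) < real_of_int p0 + 1}"

definition splits :: "nat \<Rightarrow> nat set \<Rightarrow> (nat \<Rightarrow> real) set set" where
  "splits n J = {split_set n p p0 | p p0. \<forall>j. j \<notin> J \<longrightarrow> p j = 0}"

definition SC :: "nat \<Rightarrow> nat set \<Rightarrow> (nat \<Rightarrow> real) set \<Rightarrow> (nat \<Rightarrow> real) set" where
  "SC n J X = (\<Inter>S\<in>splits n J. conv (X - S))"

definition SC_iter :: "nat \<Rightarrow> nat \<Rightarrow> nat set \<Rightarrow> (nat \<Rightarrow> real) set \<Rightarrow> (nat \<Rightarrow> real) set" where
  "SC_iter k n J X = (SC n J ^^ k) X"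

text \<open>f(x) = (g(x^1), x^2) with g(y) = V y + v, V integral l' x l, v integral.\<close>

definition lift_map ::
  "nat \<Rightarrow> nat \<Rightarrow> nat \<Rightarrow> (nat \<Rightarrow> nat \<Rightarrow> int) \<Rightarrow> (nat \<Rightarrow> int) \<Rightarrow> (nat \<Rightarrow> real) \<Rightarrow> (nat \<Rightarrow> real)" where
  "lift_map l l' n V v x = (\<lambda>i.
     if i < l' then (\<Sum>j<l. real_of_int (V i j) * x j) + real_of_int (v i)
     else if i < n then x (i - l' + l) else 0)"

end

theory Submission
  imports Defs
begin

lemma conv_convex: "convex_fun (conv A)"
  unfolding conv_def
  by (rule hull_in) (auto simp: convex_fun_def)

lemma conv_mono: "A \<subseteq> B \<Longrightarrow> conv A \<subseteq> conv B"
  unfolding conv_def by (rule hull_mono)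

lemma conv_sub: "A \<subseteq> conv A"
  unfolding conv_def by (rule hull_subset)

lemma conv_min: "A \<subseteq> B \<Longrightarrow> convex_fun B \<Longrightarrow> conv A \<subseteq> B"
  unfolding conv_def by (rule hull_minimal)

lemma Rn_convex: "convex_fun (Rn m)"
  by (auto simp: convex_fun_def Rn_def)

lemma lift_affine:
  "lift_map l l' n V v (\<lambda>i. u * x i + (1 - u) * y i)
   = (\<lambda>i. u * lift_map l l' n V v x i + (1 - u) * lift_map l l' n V v y i)"
proof
  fix i
  show "lift_map l l' n V v (\<lambda>i. u * x i + (1 - u) * y i) i
   = u * lift_map l l' n V v x i + (1 - u) * lift_map l l' n V v y i"
  proof (cases "i < l'")
    case True
    have "(\<Sum>j<l. real_of_int (V i j) * (u * x j + (1 - u) * y j))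
      = u * (\<Sum>j<l. real_of_int (V i j) * x j) + (1 - u) * (\<Sum>j<l. real_of_int (V i j) * y j)"
      unfolding sum_distrib_left sum.distrib[symmetric] by (rule sum.cong) (auto simp: algebra_simps)
    then show ?thesis using True by (simp add: lift_map_def algebra_simps)
  qed (auto simp: lift_map_def algebra_simps)
qed

lemma conv_image:
  assumes "lift_map l l' n V v ` A \<subseteq> B"
  shows "lift_map l l' n V v ` conv A \<subseteq> conv B"
proof -
  let ?f = "lift_map l l' n V v"
  have "conv A \<subseteq> {x. ?f x \<in> conv B}"
  proof (rule conv_min)
    show "A \<subseteq> {x. ?f x \<in> conv B}" using assms conv_sub[of B] by auto
    show "convex_fun {x. ?f x \<in> conv B}"
      using conv_convex[of B] unfolding convex_fun_def by (auto simp: lift_affine)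
  qed
  then show ?thesis by auto
qed


lemma sum_lift:
  assumes "\<forall>j. j \<notin> {0..<l'} \<longrightarrow> p j = 0" "l' \<le> n" "l \<le> m"
  shows "(\<Sum>i<n. real_of_int (p i) * lift_map l l' n V v x i)
    = (\<Sum>j<m. real_of_int (if j < l then (\<Sum>i<l'. p i * V i j) else 0) * x j)
      + real_of_int (\<Sum>i<l'. p i * v i)"
proof -
  have "(\<Sum>i<n. real_of_int (p i) * lift_map l l' n V v x i)
     = (\<Sum>i<l'. real_of_int (p i) * lift_map l l' n V v x i)"
    by (rule sum.mono_neutral_right) (use assms(1,2) in auto)
  also have "\<dots> = (\<Sum>i<l'. (\<Sum>j<l. real_of_int (p i) * real_of_int (V i j) * x j)
       + real_of_int (p i) * real_of_int (v i))"
    by (auto simp: lift_map_def sum_distrib_left algebra_simps intro!: sum.cong)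
  also have "\<dots> = (\<Sum>j<l. (\<Sum>i<l'. real_of_int (p i) * real_of_int (V i j)) * x j)
       + (\<Sum>i<l'. real_of_int (p i) * real_of_int (v i))"
    by (simp add: sum.distrib sum_distrib_right sum.swap[of _ "{..<l'}"])
  also have "(\<Sum>j<l. (\<Sum>i<l'. real_of_int (p i) * real_of_int (V i j)) * x j)
     = (\<Sum>j<m. real_of_int (if j < l then (\<Sum>i<l'. p i * V i j) else 0) * x j)"
    by (rule sym, rule sum.mono_neutral_cong_right) (use assms(3) in auto)
  finally show ?thesis by simp
qed

lemma SC_step:
  assumes "X \<subseteq> Rn m" "lift_map l l' n V v ` X \<subseteq> Y" "l' \<le> n" "l \<le> m"
  shows "SC m {0..<l} X \<subseteq> Rn m" "lift_map l l' n V v ` SC m {0..<l} X \<subseteq> SC n {0..<l'} Y"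
proof -
  have "split_set m (\<lambda>_. 0) 0 \<in> splits m {0..<l}" by (auto simp: splits_def)
  moreover have "conv (X - S) \<subseteq> Rn m" for S
    using assms(1) by (intro conv_min Rn_convex) auto
  ultimately show "SC m {0..<l} X \<subseteq> Rn m" unfolding SC_def by blast
next
  let ?f = "lift_map l l' n V v"
  show "?f ` SC m {0..<l} X \<subseteq> SC n {0..<l'} Y"
  proof (clarsimp simp: SC_def)
    fix x S' assume x: "\<forall>S\<in>splits m {0..<l}. x \<in> conv (X - S)" and S': "S' \<in> splits n {0..<l'}"
    then obtain p p0 where S'd: "S' = split_set n p p0" and p: "\<forall>j. j \<notin> {0..<l'} \<longrightarrow> p j = 0"
      by (auto simp: splits_def)
    define q where "q = (\<lambda>j. if j < l then (\<Sum>i<l'. p i * V i j) else 0)"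
    define c where "c = (\<Sum>i<l'. p i * v i)"
    have S: "split_set m q (p0 - c) \<in> splits m {0..<l}" by (auto simp: splits_def q_def)
    have "?f ` (X - split_set m q (p0 - c)) \<subseteq> Y - S'"
    proof (rule image_subsetI)
      fix y assume "y \<in> X - split_set m q (p0 - c)"
      then have y: "y \<in> X" "y \<notin> split_set m q (p0 - c)" by auto
      have ym: "y \<in> Rn m" using y assms(1) by auto
      have fy: "?f y \<in> Rn n" using assms(3) by (auto simp: Rn_def lift_map_def)
      have eq: "(\<Sum>i<n. real_of_int (p i) * ?f y i) = (\<Sum>j<m. real_of_int (q j) * y j) + real_of_int c"
        unfolding q_def c_def by (rule sum_lift[OF p assms(3,4)])
      have "?f y \<in> Y" using y assms(2) by auto
      moreover have "?f y \<notin> S'"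
        using y(2) ym fy eq unfolding S'd split_set_def by auto
      ultimately show "?f y \<in> Y - S'" by blast
    qed
    then have "?f ` conv (X - split_set m q (p0 - c)) \<subseteq> conv (Y - S')" by (rule conv_image)
    then show "?f x \<in> conv (Y - S')" using x S by blast
  qed
qed

theorem theorem2:
  fixes m n l l' :: nat
    and P Q :: "(nat \<Rightarrow> real) set"
    and V :: "nat \<Rightarrow> nat \<Rightarrow> int" and v :: "nat \<Rightarrow> int"
    and k :: nat
  assumes "P \<subseteq> Rn m" and "Q \<subseteq> Rn n"
    and "0 < l" and "l \<le> m" and "0 < l'" and "l' \<le> n"
    and "m - l = n - l'"
    and "lift_map l l' n V v ` P \<subseteq> Q"
    and "1 \<le> k"
  shows "lift_map l l' n V v ` SC_iter k m {0..<l} P \<subseteq> SC_iter k n {0..<l'} Q"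
proof -
  have "SC_iter k m {0..<l} P \<subseteq> Rn m \<and> lift_map l l' n V v ` SC_iter k m {0..<l} P \<subseteq> SC_iter k n {0..<l'} Q"
  proof (induction k)
    case 0
    then show ?case using assms by (simp add: SC_iter_def)
  next
    case (Suc k)
    then have a: "(SC m {0..<l} ^^ k) P \<subseteq> Rn m"
      "lift_map l l' n V v ` (SC m {0..<l} ^^ k) P \<subseteq> (SC n {0..<l'} ^^ k) Q"
      by (simp_all add: SC_iter_def)
    show ?case using SC_step[OF a assms(6) assms(4)] by (simp add: SC_iter_def)
  qed
  then show ?thesis by blast
qed

end
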